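(* Let $s\in(0,1)$, $d\ge1$ and let $B:=B_{\rho_0}(y_0)\subset\mathbb{R}^{1+d}$ be a half-parabolic ball. Let $S$ and $D$ be non-negative, monotone (with respect to inclusion) functions defined on the convex subsets of $B$. Assume that for every $n\in\mathbb{N}$ there is $C(n)>0$ such that for all half-parabolic balls $B_0,B_1,\dots,B_n\subset B$ with $B_0\subset\bigcup_{i=1}^nB_i$, $$S(B_0)\le C(n)\Big(\sum_{i=1}^nS(B_i)+D(B)\Big).$$ Then for any $\theta_0\in(0,1/2]$ and $\gamma>0$ there exists $\varepsilon=\varepsilon(\theta_0,\gamma,s,d,\rho_0)\in(0,1)$ such that, if for some $E\ge0$ $$\sigma^\gamma S(B_{\theta_0\sigma}(y))\le\varepsilon\,\sigma^\gamma S(B_\sigma(y))+E\quad\text{for all }B_\sigma(y)\subset B,$$ then for each $\theta\in(0,1)$ there is $C=C(d,\theta_0,\theta,\gamma,s,\rho_0)>0$ with $$\sigma^\gamma S(B_{\theta\sigma}(y))\le C\,(E+D(B))\quad\text{for all }B_\sigma(y)\subset B.$$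
   Context: Points of $\mathbb{R}^{1+d}$ are $x=(x_0,x_{1:d})$. For $r>0$ the half-parabolic ball is $B_r(x):=(x_0-r^{2s},x_0]\times B_r(x_{1:d})$, where $B_r(x_{1:d})$ is the open Euclidean ball in $\mathbb{R}^d$. *)

theory Defs
  imports "HOL-Analysis.Analysis"
begin

text \<open>Points of R^(1+d) are pairs (x0, x') with x0 real and x' in real^'n, d = CARD('n) >= 1.
  Half-parabolic ball: B_r(x) = (x0 - r^(2s), x0] x B_r(x').\<close>

definition hpball :: "real \<Rightarrow> real \<Rightarrow> real \<times> (real ^ 'n) \<Rightarrow> (real \<times> (real ^ 'n)) set" where
  "hpball s r x = {z. fst x - r powr (2 * s) < fst z \<and> fst z \<le> fst x \<and> snd z \<in> ball (snd x) r}"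

definition nonneg_mono_on_convex ::
  "(real \<times> (real ^ 'n)) set \<Rightarrow> ((real \<times> (real ^ 'n)) set \<Rightarrow> real) \<Rightarrow> bool" where
  "nonneg_mono_on_convex B F \<longleftrightarrow>
     (\<forall>A. convex A \<and> A \<subseteq> B \<longrightarrow> 0 \<le> F A) \<and>
     (\<forall>A A'. convex A \<and> convex A' \<and> A \<subseteq> A' \<and> A' \<subseteq> B \<longrightarrow> F A \<le> F A')"

end

theory Submission imports Defs begin

lemma hpball_Times: "hpball s r x = {fst x - r powr (2 * s)<..fst x} \<times> ball (snd x) r"
  by (auto simp: hpball_def)

lemma hpball_convex: "convex (hpball s r x)"
  unfolding hpball_Times by (intro convex_Times convex_ball) (simp add: convex_real_interval)

lemma hpball_mono:
  assumes "0 < s" "0 < r" "r \<le> r'"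
  shows "hpball s r x \<subseteq> hpball s r' x"
proof -
  have "r powr (2 * s) \<le> r' powr (2 * s)" using assms by (intro powr_mono2) auto
  moreover have "ball (snd x) r \<subseteq> ball (snd x) r'" using assms by auto
  ultimately show ?thesis unfolding hpball_Times by auto
qed

lemma hpball_rad_le:
  assumes "0 < s" "0 < \<sigma>" "hpball s \<sigma> y \<subseteq> hpball s \<rho> y0"
  shows "\<sigma> \<le> \<rho>"
proof -
  have "ball (snd y) \<sigma> \<subseteq> ball (snd y0) \<rho>"
  proof
    fix v assume "v \<in> ball (snd y) \<sigma>"
    moreover have "0 < \<sigma> powr (2 * s)" using assms by simp
    ultimately have "(fst y, v) \<in> hpball s \<sigma> y" by (auto simp: hpball_def)
    then have "(fst y, v) \<in> hpball s \<rho> y0" using assms(3) by blast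
    then show "v \<in> ball (snd y0) \<rho>" by (simp add: hpball_def)
  qed
  then have "dist (snd y) (snd y0) + \<sigma> \<le> \<rho>" using assms(2) by (auto simp: ball_subset_ball_iff)
  moreover have "0 \<le> dist (snd y) (snd y0)" by simp
  ultimately show ?thesis by linarith
qed

definition sh :: "real \<Rightarrow> real \<times> (real ^ 'n) \<Rightarrow> real \<Rightarrow> real \<times> (real ^ 'n) \<Rightarrow> real \<times> (real ^ 'n)" where
  "sh s y \<sigma> q = (fst y + \<sigma> powr (2 * s) * fst q, snd y + \<sigma> *\<^sub>R snd q)"

lemma cover_sum:
  fixes S D :: "(real \<times> (real ^ 'n)) set \<Rightarrow> real"
  assumes H: "\<forall>n (c :: nat \<Rightarrow> real \<times> (real ^ 'n)) (r :: nat \<Rightarrow> real).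
              (\<forall>i\<le>n. 0 < r i \<and> hpball s (r i) (c i) \<subseteq> B) \<and>
              hpball s (r 0) (c 0) \<subseteq> (\<Union>i\<in>{1..n}. hpball s (r i) (c i)) \<longrightarrow>
              S (hpball s (r 0) (c 0)) \<le> C n * ((\<Sum>i=1..n. S (hpball s (r i) (c i))) + D B)"
    and P: "finite P" and rr: "0 < rr" "hpball s rr cc \<subseteq> B"
    and Q: "\<forall>q\<in>P. 0 < rad q \<and> hpball s (rad q) (cen q) \<subseteq> B"
    and cov: "hpball s rr cc \<subseteq> (\<Union>q\<in>P. hpball s (rad q) (cen q))"
  shows "S (hpball s rr cc) \<le> C (card P) * ((\<Sum>q\<in>P. S (hpball s (rad q) (cen q))) + D B)"
proof -
  obtain h where h: "bij_betw h {1..card P} P" using ex_bij_betw_nat_finite_1[OF P] by blast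
  define c where "c i = (if i = 0 then cc else cen (h i))" for i
  define r where "r i = (if i = 0 then rr else rad (h i))" for i
  have hi: "h i \<in> P" if "i \<in> {1..card P}" for i using h that by (auto simp: bij_betw_def)
  have A: "\<forall>i\<le>card P. 0 < r i \<and> hpball s (r i) (c i) \<subseteq> B"
  proof (intro allI impI)
    fix i assume "i \<le> card P"
    show "0 < r i \<and> hpball s (r i) (c i) \<subseteq> B"
    proof (cases "i = 0")
      case True then show ?thesis using rr by (simp add: c_def r_def)
    next
      case False then have "i \<in> {1..card P}" using \<open>i \<le> card P\<close> by auto
      then show ?thesis using Q hi False by (simp add: c_def r_def)
    qed
  qed
  have U: "(\<Union>i\<in>{1..card P}. hpball s (r i) (c i)) = (\<Union>q\<in>P. hpball s (rad q) (cen q))"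
  proof -
    have "(\<Union>i\<in>{1..card P}. hpball s (r i) (c i)) = (\<Union>i\<in>{1..card P}. hpball s (rad (h i)) (cen (h i)))"
      by (auto simp: c_def r_def)
    also have "\<dots> = (\<Union>q\<in>h ` {1..card P}. hpball s (rad q) (cen q))" by auto
    also have "h ` {1..card P} = P" using h by (simp add: bij_betw_def)
    finally show ?thesis .
  qed
  have Sm: "(\<Sum>i=1..card P. S (hpball s (r i) (c i))) = (\<Sum>q\<in>P. S (hpball s (rad q) (cen q)))"
  proof -
    have "(\<Sum>i=1..card P. S (hpball s (r i) (c i))) = (\<Sum>i=1..card P. S (hpball s (rad (h i)) (cen (h i))))"
      by (intro sum.cong) (auto simp: c_def r_def)
    also have "\<dots> = (\<Sum>q\<in>P. S (hpball s (rad q) (cen q)))"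
      using sum.reindex_bij_betw[OF h, of "\<lambda>q. S (hpball s (rad q) (cen q))"] .
    finally show ?thesis .
  qed
  have "S (hpball s (r 0) (c 0)) \<le> C (card P) * ((\<Sum>i=1..card P. S (hpball s (r i) (c i))) + D B)"
  proof (rule H[rule_format, of "card P" r c], intro conjI)
    show "\<forall>i\<le>card P. 0 < r i \<and> hpball s (r i) (c i) \<subseteq> B" by (rule A)
    show "hpball s (r 0) (c 0) \<subseteq> (\<Union>i\<in>{1..card P}. hpball s (r i) (c i))"
      using cov U by (simp add: c_def r_def)
  qed
  then show ?thesis using Sm by (simp add: c_def r_def)
qed


lemma rel_cover:
  fixes s a lam :: real
  assumes "0 < s" "0 < a" "a < 1" "0 < lam"
  shows "\<exists>c (P :: (real \<times> (real ^ 'n)) set). 0 < c \<and> finite P \<and>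
     (\<forall>q\<in>P. fst q \<le> 0 \<and> -1 \<le> fst q - c powr (2 * s) \<and> norm (snd q) + c \<le> 1) \<and>
     (\<forall>u v. - (a powr (2 * s)) < u \<and> u \<le> 0 \<and> norm v < a \<longrightarrow>
        (\<exists>q\<in>P. fst q - (lam * c) powr (2 * s) < u \<and> u \<le> fst q \<and> norm (v - snd q) < lam * c))"
proof -
  have a2: "a powr (2 * s) < 1"
    using powr_less_mono2[of "2 * s" a 1] assms by simp
  define c where "c = min (1 - a) ((1 - a powr (2 * s)) powr (1 / (2 * s)))"
  have c0: "0 < c" using assms a2 by (simp add: c_def)
  have c1: "c \<le> 1 - a" by (simp add: c_def)
  have c2: "c powr (2 * s) \<le> 1 - a powr (2 * s)"
  proof -
    have "c powr (2 * s) \<le> ((1 - a powr (2 * s)) powr (1 / (2 * s))) powr (2 * s)"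
      using c0 assms by (intro powr_mono2) (auto simp: c_def)
    also have "\<dots> = 1 - a powr (2 * s)" using assms a2 by (simp add: powr_powr)
    finally show ?thesis .
  qed
  define h where "h = (lam * c) powr (2 * s)"
  have h0: "0 < h" using c0 assms by (simp add: h_def)
  define J where "J = nat \<lfloor>a powr (2 * s) / h\<rfloor>"
  have J: "real J * h \<le> a powr (2 * s)"
  proof -
    have "real J \<le> a powr (2 * s) / h" unfolding J_def
      using h0 by (simp add: of_nat_floor)
    then show ?thesis using h0 by (simp add: field_simps)
  qed
  define T where "T = (\<lambda>j. - real j * h) ` {0..J}"
  have "compact (cball (0 :: real ^ 'n) a)" by simp
  moreover have "\<And>p. p \<in> cball (0 :: real ^ 'n) a \<Longrightarrow> open (ball p (lam * c))" by simp
  moreover have "cball (0 :: real ^ 'n) a \<subseteq> (\<Union>p\<in>cball 0 a. ball p (lam * c))"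
  proof
    fix x :: "real ^ 'n" assume "x \<in> cball 0 a"
    then show "x \<in> (\<Union>p\<in>cball 0 a. ball p (lam * c))" using c0 assms by (intro UN_I[of x]) auto
  qed
  ultimately obtain F where F: "F \<subseteq> cball (0 :: real ^ 'n) a" "finite F"
    "cball (0 :: real ^ 'n) a \<subseteq> (\<Union>p\<in>F. ball p (lam * c))"
    by (rule compactE_image)
  define P where "P = T \<times> F"
  have "finite P" using F by (simp add: P_def T_def)
  moreover have "\<forall>q\<in>P. fst q \<le> 0 \<and> -1 \<le> fst q - c powr (2 * s) \<and> norm (snd q) + c \<le> 1"
  proof
    fix q assume "q \<in> P"
    then obtain j p where q: "q = (- real j * h, p)" "j \<le> J" "p \<in> F"
    proof -
      from \<open>q \<in> P\<close> have "fst q \<in> T" "snd q \<in> F" by (auto simp: P_def)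
      then obtain j where "j \<in> {0..J}" "fst q = - real j * h" unfolding T_def by blast
      then show ?thesis using that[of j "snd q"] \<open>snd q \<in> F\<close> by (metis atLeastAtMost_iff prod.collapse)
    qed
    have "real j * h \<le> real J * h" using q h0 by (intro mult_right_mono) auto
    then have "- real j * h - c powr (2 * s) \<ge> -1" using J c2 by linarith
    moreover have "norm p \<le> a" using F q by auto
    ultimately show "fst q \<le> 0 \<and> -1 \<le> fst q - c powr (2 * s) \<and> norm (snd q) + c \<le> 1"
      using q h0 c1 by auto
  qed
  moreover have "\<forall>u v. - (a powr (2 * s)) < u \<and> u \<le> 0 \<and> norm v < a \<longrightarrow>
        (\<exists>q\<in>P. fst q - (lam * c) powr (2 * s) < u \<and> u \<le> fst q \<and> norm (v - snd q) < lam * c)"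
  proof (intro allI impI)
    fix u and v :: "real ^ 'n"
    assume uv: "- (a powr (2 * s)) < u \<and> u \<le> 0 \<and> norm v < a"
    define j where "j = nat \<lfloor>- u / h\<rfloor>"
    have j1: "real j \<le> - u / h" using uv h0 by (simp add: j_def of_nat_floor divide_nonpos_pos)
    have "0 \<le> - u / h" using uv h0 by (simp add: divide_nonpos_pos)
    then have "real j = of_int \<lfloor>- u / h\<rfloor>" unfolding j_def by (rule of_nat_int_floor)
    then have j2: "- u / h < real j + 1" using floor_correct[of "- u / h"] by linarith
    have "- u / h \<le> a powr (2 * s) / h" using uv h0 by (intro divide_right_mono) auto
    then have jJ: "j \<le> J" unfolding j_def J_def by (intro nat_mono floor_mono)
    have t1: "u \<le> - real j * h" using j1 h0 by (simp add: field_simps)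
    have t2: "- real j * h - h < u" using j2 h0 by (simp add: field_simps)
    have "v \<in> cball 0 a" using uv by simp
    then obtain p where p: "p \<in> F" "dist p v < lam * c" using F(3) by auto
    show "\<exists>q\<in>P. fst q - (lam * c) powr (2 * s) < u \<and> u \<le> fst q \<and> norm (v - snd q) < lam * c"
    proof (rule bexI[of _ "(- real j * h, p)"])
      show "(- real j * h, p) \<in> P" using jJ p by (auto simp: P_def T_def)
      show "fst (- real j * h, p) - (lam * c) powr (2 * s) < u \<and> u \<le> fst (- real j * h, p) \<and>
        norm (v - snd (- real j * h, p)) < lam * c"
        using t1 t2 p by (simp add: h_def dist_norm norm_minus_commute)
    qed
  qed
  ultimately show ?thesis using c0 by blast
qed


lemma hp_cover:
  fixes s a lam :: real
  assumes "0 < s" "0 < a" "a < 1" "0 < lam"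
  shows "\<exists>c (P :: (real \<times> (real ^ 'n)) set). 0 < c \<and> finite P \<and>
     (\<forall>y \<sigma>. 0 < \<sigma> \<longrightarrow> (\<forall>q\<in>P. hpball s (c * \<sigma>) (sh s y \<sigma> q) \<subseteq> hpball s \<sigma> y) \<and>
        hpball s (a * \<sigma>) y \<subseteq> (\<Union>q\<in>P. hpball s (lam * (c * \<sigma>)) (sh s y \<sigma> q)))"
proof -
  obtain c and P :: "(real \<times> (real ^ 'n)) set" where c0: "0 < c" and fP: "finite P"
    and P1: "\<forall>q\<in>P. fst q \<le> 0 \<and> -1 \<le> fst q - c powr (2 * s) \<and> norm (snd q) + c \<le> 1"
    and P2: "\<forall>u v. - (a powr (2 * s)) < u \<and> u \<le> 0 \<and> norm v < a \<longrightarrow>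
        (\<exists>q\<in>P. fst q - (lam * c) powr (2 * s) < u \<and> u \<le> fst q \<and> norm (v - snd q) < lam * c)"
    using rel_cover[OF assms] by blast
  have "(\<forall>y \<sigma>. 0 < \<sigma> \<longrightarrow> (\<forall>q\<in>P. hpball s (c * \<sigma>) (sh s y \<sigma> q) \<subseteq> hpball s \<sigma> y) \<and>
        hpball s (a * \<sigma>) y \<subseteq> (\<Union>q\<in>P. hpball s (lam * (c * \<sigma>)) (sh s y \<sigma> q)))"
  proof (intro allI impI conjI ballI subsetI)
    fix y :: "real \<times> (real ^ 'n)" and \<sigma> :: real and q w
    assume \<sigma>: "0 < \<sigma>" and q: "q \<in> P" and w: "w \<in> hpball s (c * \<sigma>) (sh s y \<sigma> q)"
    define \<Sigma> where "\<Sigma> = \<sigma> powr (2 * s)"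
    have \<Sigma>0: "0 < \<Sigma>" using \<sigma> by (simp add: \<Sigma>_def)
    have e: "(c * \<sigma>) powr (2 * s) = c powr (2 * s) * \<Sigma>" using c0 \<sigma> by (simp add: \<Sigma>_def powr_mult)
    have w1: "fst y + \<Sigma> * fst q - c powr (2 * s) * \<Sigma> < fst w" "fst w \<le> fst y + \<Sigma> * fst q"
      and w2: "dist (snd y + \<sigma> *\<^sub>R snd q) (snd w) < c * \<sigma>"
      using w e by (auto simp: hpball_def sh_def \<Sigma>_def)
    have "\<Sigma> * (-1) \<le> \<Sigma> * (fst q - c powr (2 * s))" using P1 q \<Sigma>0 by (intro mult_left_mono) auto
    then have t1: "fst y - \<Sigma> < fst w" using w1 by (simp add: algebra_simps)
    have "\<Sigma> * fst q \<le> 0" using P1 q \<Sigma>0 by (simp add: mult_nonneg_nonpos)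
    then have t2: "fst w \<le> fst y" using w1 by simp
    have "norm (snd w - snd y) \<le> norm (snd w - (snd y + \<sigma> *\<^sub>R snd q)) + norm (\<sigma> *\<^sub>R snd q)"
      by (rule order_trans[OF _ norm_triangle_ineq]) (simp add: algebra_simps)
    also have "\<dots> < c * \<sigma> + \<sigma> * norm (snd q)" using w2 \<sigma> by (simp add: dist_norm norm_minus_commute)
    also have "\<dots> = \<sigma> * (norm (snd q) + c)" by (simp add: algebra_simps)
    also have "\<dots> \<le> \<sigma> * 1" using P1 q \<sigma> by (intro mult_left_mono) auto
    finally have "norm (snd w - snd y) < \<sigma>" by simp
    then show "w \<in> hpball s \<sigma> y" using t1 t2 by (simp add: hpball_def \<Sigma>_def dist_norm norm_minus_commute)
  next
    fix y :: "real \<times> (real ^ 'n)" and \<sigma> :: real and w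
    assume \<sigma>: "0 < \<sigma>" and w: "w \<in> hpball s (a * \<sigma>) y"
    define \<Sigma> where "\<Sigma> = \<sigma> powr (2 * s)"
    have \<Sigma>0: "0 < \<Sigma>" using \<sigma> by (simp add: \<Sigma>_def)
    have e: "(a * \<sigma>) powr (2 * s) = a powr (2 * s) * \<Sigma>" using assms \<sigma> by (simp add: \<Sigma>_def powr_mult)
    have e2: "(lam * (c * \<sigma>)) powr (2 * s) = (lam * c) powr (2 * s) * \<Sigma>"
      using assms c0 \<sigma> by (simp add: \<Sigma>_def powr_mult[symmetric] mult.assoc)
    define u where "u = (fst w - fst y) / \<Sigma>"
    define v where "v = (1 / \<sigma>) *\<^sub>R (snd w - snd y)"
    have w1: "fst y - a powr (2 * s) * \<Sigma> < fst w" "fst w \<le> fst y"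
      and w2: "norm (snd w - snd y) < a * \<sigma>"
      using w e by (auto simp: hpball_def \<Sigma>_def dist_norm norm_minus_commute)
    have fw: "fst w = fst y + \<Sigma> * u" using \<Sigma>0 by (simp add: u_def)
    have sw: "snd w = snd y + \<sigma> *\<^sub>R v" using \<sigma> by (simp add: v_def)
    have u1: "- (a powr (2 * s)) < u" using w1 \<Sigma>0 by (simp add: u_def field_simps)
    have u2: "u \<le> 0" using w1 \<Sigma>0 by (simp add: u_def divide_nonpos_pos)
    have "norm v = norm (snd w - snd y) / \<sigma>" using \<sigma> by (simp add: v_def)
    then have "\<sigma> * norm v < \<sigma> * a" using w2 \<sigma> by (simp add: field_simps)
    then have nv: "norm v < a" using \<sigma> by simp
    obtain q where q: "q \<in> P" "fst q - (lam * c) powr (2 * s) < u" "u \<le> fst q"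
      "norm (v - snd q) < lam * c" using P2 u1 u2 nv by blast
    have "\<Sigma> * (fst q - (lam * c) powr (2 * s)) < \<Sigma> * u" using q \<Sigma>0 by simp
    moreover have "\<Sigma> * u \<le> \<Sigma> * fst q" using q \<Sigma>0 by simp
    moreover have "norm (snd w - (snd y + \<sigma> *\<^sub>R snd q)) < lam * (c * \<sigma>)"
    proof -
      have "snd w - (snd y + \<sigma> *\<^sub>R snd q) = \<sigma> *\<^sub>R (v - snd q)" by (simp add: sw algebra_simps)
      then have "norm (snd w - (snd y + \<sigma> *\<^sub>R snd q)) = \<sigma> * norm (v - snd q)" using \<sigma> by simp
      also have "\<dots> < \<sigma> * (lam * c)" using q \<sigma> by simp
      finally show ?thesis by (simp add: algebra_simps)
    qed
    ultimately have "w \<in> hpball s (lam * (c * \<sigma>)) (sh s y \<sigma> q)"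
      using fw e2 by (simp add: hpball_def sh_def \<Sigma>_def dist_norm norm_minus_commute algebra_simps)
    then show "w \<in> (\<Union>q\<in>P. hpball s (lam * (c * \<sigma>)) (sh s y \<sigma> q))" using q by blast
  qed
  then show ?thesis using c0 fP by blast
qed


lemma core:
  fixes s \<theta>0 \<gamma> \<rho>0 \<epsilon> c E :: real and C :: "nat \<Rightarrow> real" and y0 :: "real \<times> (real ^ 'n)"
    and P :: "(real \<times> (real ^ 'n)) set" and S D :: "(real \<times> (real ^ 'n)) set \<Rightarrow> real"
  assumes s: "0 < s" and \<rho>0: "0 < \<rho>0" and th0: "0 < \<theta>0" "\<theta>0 \<le> 1/2" and g: "0 < \<gamma>"
    and Cpos: "\<forall>n. 0 < C n"
    and c0: "0 < c" and fP: "finite P"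
    and cP: "\<forall>y \<sigma>. 0 < \<sigma> \<longrightarrow> (\<forall>q\<in>P. hpball s (c * \<sigma>) (sh s y \<sigma> q) \<subseteq> hpball s \<sigma> y) \<and>
        hpball s (1/2 * \<sigma>) y \<subseteq> (\<Union>q\<in>P. hpball s (\<theta>0/2 * (c * \<sigma>)) (sh s y \<sigma> q))"
    and eps: "0 < \<epsilon>" "\<epsilon> \<le> 1" "\<epsilon> * (C (card P) * real (card P) / c powr \<gamma>) \<le> 1/2"
    and Bdef: "B = hpball s \<rho>0 y0"
    and nS: "nonneg_mono_on_convex B S" and nD: "nonneg_mono_on_convex B D"
    and H: "\<forall>n (c :: nat \<Rightarrow> real \<times> (real ^ 'n)) (r :: nat \<Rightarrow> real).
              (\<forall>i\<le>n. 0 < r i \<and> hpball s (r i) (c i) \<subseteq> B) \<and>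
              hpball s (r 0) (c 0) \<subseteq> (\<Union>i\<in>{1..n}. hpball s (r i) (c i)) \<longrightarrow>
              S (hpball s (r 0) (c 0)) \<le> C n * ((\<Sum>i=1..n. S (hpball s (r i) (c i))) + D B)"
    and E0: "0 \<le> E"
    and EH: "\<forall>y \<sigma>. 0 < \<sigma> \<and> hpball s \<sigma> y \<subseteq> B \<longrightarrow>
              \<sigma> powr \<gamma> * S (hpball s (\<theta>0 * \<sigma>) y) \<le> \<epsilon> * \<sigma> powr \<gamma> * S (hpball s \<sigma> y) + E"
  shows "\<forall>y \<sigma>. 0 < \<sigma> \<and> hpball s \<sigma> y \<subseteq> B \<longrightarrow>
     \<sigma> powr \<gamma> * S (hpball s (\<theta>0/2 * \<sigma>) y) \<le> 2 * (2 powr \<gamma> * E + C (card P) * \<rho>0 powr \<gamma> * D B)"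
proof -
  define N where "N = card P"
  have convB: "convex B" unfolding Bdef by (rule hpball_convex)
  have SB: "0 \<le> S (hpball s r z) \<and> S (hpball s r z) \<le> S B" if "hpball s r z \<subseteq> B" for r z
    using nS that convB hpball_convex[of s r z] unfolding nonneg_mono_on_convex_def by blast
  have Smono: "S (hpball s r z) \<le> S (hpball s r' z')" if "hpball s r z \<subseteq> hpball s r' z'" "hpball s r' z' \<subseteq> B" for r z r' z'
    using nS that hpball_convex[of s r z] hpball_convex[of s r' z'] unfolding nonneg_mono_on_convex_def by blast
  have DB: "0 \<le> D B" using nD convB unfolding nonneg_mono_on_convex_def by blast
  have rle: "\<sigma> \<le> \<rho>0" if "0 < \<sigma>" "hpball s \<sigma> y \<subseteq> B" for \<sigma> y
    using hpball_rad_le[OF s that(1)] that(2) unfolding Bdef by blast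
  have sub2: "hpball s (\<theta>0/2 * \<sigma>) y \<subseteq> hpball s \<sigma> y" if "0 < \<sigma>" for \<sigma> y
    using th0 that by (intro hpball_mono s) (auto simp: mult_le_cancel_right1)
  define X where "X = {\<sigma> powr \<gamma> * S (hpball s (\<theta>0/2 * \<sigma>) y) | y \<sigma>. 0 < \<sigma> \<and> hpball s \<sigma> y \<subseteq> B}"
  have bdd: "bdd_above X"
  proof (rule bdd_aboveI[of _ "\<rho>0 powr \<gamma> * S B"])
    fix x assume "x \<in> X"
    then obtain y \<sigma> where x: "x = \<sigma> powr \<gamma> * S (hpball s (\<theta>0/2 * \<sigma>) y)" "0 < \<sigma>" "hpball s \<sigma> y \<subseteq> B"
      unfolding X_def by blast
    have "hpball s (\<theta>0/2 * \<sigma>) y \<subseteq> B" using sub2[OF x(2)] x(3) by blast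
    then have "0 \<le> S (hpball s (\<theta>0/2 * \<sigma>) y)" "S (hpball s (\<theta>0/2 * \<sigma>) y) \<le> S B" using SB by blast+
    moreover have "\<sigma> powr \<gamma> \<le> \<rho>0 powr \<gamma>" using rle[OF x(2,3)] x(2) g by (intro powr_mono2) auto
    ultimately show "x \<le> \<rho>0 powr \<gamma> * S B" unfolding x(1) by (intro mult_mono) auto
  qed
  have ne: "X \<noteq> {}"
  proof -
    have "\<rho>0 powr \<gamma> * S (hpball s (\<theta>0/2 * \<rho>0) y0) \<in> X" unfolding X_def Bdef using \<rho>0 by blast
    then show ?thesis by blast
  qed
  define M where "M = Sup X"
  have upper: "\<sigma> powr \<gamma> * S (hpball s (\<theta>0/2 * \<sigma>) y) \<le> M" if "0 < \<sigma>" "hpball s \<sigma> y \<subseteq> B" for \<sigma> y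
  proof -
    have "\<sigma> powr \<gamma> * S (hpball s (\<theta>0/2 * \<sigma>) y) \<in> X" unfolding X_def using that by blast
    then show ?thesis unfolding M_def by (intro cSup_upper bdd)
  qed
  have M0: "0 \<le> M"
  proof -
    have "hpball s (\<theta>0/2 * \<rho>0) y0 \<subseteq> B" using sub2[OF \<rho>0] Bdef by simp
    then have "0 \<le> \<rho>0 powr \<gamma> * S (hpball s (\<theta>0/2 * \<rho>0) y0)" using SB by simp
    also have "\<dots> \<le> M" using upper \<rho>0 Bdef by simp
    finally show ?thesis .
  qed
  have step: "\<sigma> powr \<gamma> * S (hpball s (\<theta>0/2 * \<sigma>) y) \<le> M / 2 + (2 powr \<gamma> * E + C N * \<rho>0 powr \<gamma> * D B)"
    if \<sigma>: "0 < \<sigma>" and yB: "hpball s \<sigma> y \<subseteq> B" for \<sigma> y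
  proof -
    have h2: "hpball s (\<sigma>/2) y \<subseteq> B" using hpball_mono[OF s, of "\<sigma>/2" \<sigma> y] \<sigma> yB by auto
    have "(\<sigma>/2) powr \<gamma> * S (hpball s (\<theta>0 * (\<sigma>/2)) y) \<le> \<epsilon> * (\<sigma>/2) powr \<gamma> * S (hpball s (\<sigma>/2) y) + E"
      using EH[rule_format, of "\<sigma>/2" y] h2 \<sigma> by simp
    moreover have "(\<sigma>/2) powr \<gamma> = \<sigma> powr \<gamma> / 2 powr \<gamma>" using \<sigma> by (simp add: powr_divide)
    moreover have "\<theta>0 * (\<sigma>/2) = \<theta>0/2 * \<sigma>" by simp
    ultimately have A: "\<sigma> powr \<gamma> / 2 powr \<gamma> * S (hpball s (\<theta>0/2 * \<sigma>) y)
        \<le> \<epsilon> * (\<sigma> powr \<gamma> / 2 powr \<gamma>) * S (hpball s (\<sigma>/2) y) + E" by simp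
    have "2 powr \<gamma> * (\<sigma> powr \<gamma> / 2 powr \<gamma> * S (hpball s (\<theta>0/2 * \<sigma>) y))
        \<le> 2 powr \<gamma> * (\<epsilon> * (\<sigma> powr \<gamma> / 2 powr \<gamma>) * S (hpball s (\<sigma>/2) y) + E)"
      using A by (intro mult_left_mono) auto
    then have A2: "\<sigma> powr \<gamma> * S (hpball s (\<theta>0/2 * \<sigma>) y)
        \<le> \<epsilon> * (\<sigma> powr \<gamma> * S (hpball s (\<sigma>/2) y)) + 2 powr \<gamma> * E"
      by (simp add: algebra_simps)
    have cov: "hpball s (\<sigma>/2) y \<subseteq> (\<Union>q\<in>P. hpball s (\<theta>0/2 * (c * \<sigma>)) (sh s y \<sigma> q))"
      using cP[rule_format, of \<sigma> y] \<sigma> by simp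
    have subq: "hpball s (\<theta>0/2 * (c * \<sigma>)) (sh s y \<sigma> q) \<subseteq> B" if "q \<in> P" for q
      using sub2[of "c * \<sigma>" "sh s y \<sigma> q"] c0 \<sigma> cP[rule_format, of \<sigma> y] that yB by auto
    have validq: "hpball s (c * \<sigma>) (sh s y \<sigma> q) \<subseteq> B" if "q \<in> P" for q
      using c0 \<sigma> cP[rule_format, of \<sigma> y] that yB by auto
    have CS: "S (hpball s (\<sigma>/2) y) \<le> C N * ((\<Sum>q\<in>P. S (hpball s (\<theta>0/2 * (c * \<sigma>)) (sh s y \<sigma> q))) + D B)"
      unfolding N_def
      by (rule cover_sum[where S=S and D=D and C=C and B=B and s=s and P=P and rr="\<sigma>/2" and cc=y
           and rad="\<lambda>q. \<theta>0/2 * (c * \<sigma>)" and cen="\<lambda>q. sh s y \<sigma> q"])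
         (use H fP h2 cov \<sigma> c0 th0 subq in auto)
    have each: "\<sigma> powr \<gamma> * S (hpball s (\<theta>0/2 * (c * \<sigma>)) (sh s y \<sigma> q)) \<le> M / c powr \<gamma>" if "q \<in> P" for q
    proof -
      have "(c * \<sigma>) powr \<gamma> * S (hpball s (\<theta>0/2 * (c * \<sigma>)) (sh s y \<sigma> q)) \<le> M"
        using upper[of "c * \<sigma>" "sh s y \<sigma> q"] c0 \<sigma> validq that by simp
      then have "c powr \<gamma> * (\<sigma> powr \<gamma> * S (hpball s (\<theta>0/2 * (c * \<sigma>)) (sh s y \<sigma> q))) \<le> M"
        using c0 \<sigma> by (simp add: powr_mult mult.assoc)
      then show ?thesis using c0 by (simp add: field_simps)
    qed
    have sumb: "(\<Sum>q\<in>P. \<sigma> powr \<gamma> * S (hpball s (\<theta>0/2 * (c * \<sigma>)) (sh s y \<sigma> q))) \<le> real N * (M / c powr \<gamma>)"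
      using sum_mono[of P _ "\<lambda>q. M / c powr \<gamma>", OF each] by (simp add: N_def)
    have sgD: "\<sigma> powr \<gamma> * D B \<le> \<rho>0 powr \<gamma> * D B"
      using rle[OF \<sigma> yB] \<sigma> g DB by (intro mult_right_mono powr_mono2) auto
    have "\<sigma> powr \<gamma> * S (hpball s (\<sigma>/2) y)
        \<le> \<sigma> powr \<gamma> * (C N * ((\<Sum>q\<in>P. S (hpball s (\<theta>0/2 * (c * \<sigma>)) (sh s y \<sigma> q))) + D B))"
      using CS by (intro mult_left_mono) auto
    also have "\<dots> = C N * ((\<Sum>q\<in>P. \<sigma> powr \<gamma> * S (hpball s (\<theta>0/2 * (c * \<sigma>)) (sh s y \<sigma> q))) + \<sigma> powr \<gamma> * D B)"
      by (simp add: sum_distrib_left algebra_simps)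
    also have "\<dots> \<le> C N * (real N * (M / c powr \<gamma>) + \<rho>0 powr \<gamma> * D B)"
      using sumb sgD Cpos[rule_format, of N] by (intro mult_left_mono add_mono) auto
    finally have B1: "\<sigma> powr \<gamma> * S (hpball s (\<sigma>/2) y) \<le> C N * (real N * (M / c powr \<gamma>) + \<rho>0 powr \<gamma> * D B)" .
    have "\<epsilon> * (\<sigma> powr \<gamma> * S (hpball s (\<sigma>/2) y)) \<le> \<epsilon> * (C N * (real N * (M / c powr \<gamma>) + \<rho>0 powr \<gamma> * D B))"
      using B1 eps by (intro mult_left_mono) auto
    also have "\<dots> = (\<epsilon> * (C N * real N / c powr \<gamma>)) * M + \<epsilon> * (C N * \<rho>0 powr \<gamma> * D B)"
      by (simp add: algebra_simps)
    also have "\<dots> \<le> 1/2 * M + 1 * (C N * \<rho>0 powr \<gamma> * D B)"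
    proof (intro add_mono mult_right_mono)
      show "\<epsilon> * (C N * real N / c powr \<gamma>) \<le> 1/2" using eps by (simp add: N_def)
      show "0 \<le> M" by (rule M0)
      show "\<epsilon> \<le> 1" by (rule eps)
      show "0 \<le> C N * \<rho>0 powr \<gamma> * D B" using Cpos DB by (simp add: less_imp_le)
    qed
    finally show ?thesis using A2 by simp
  qed
  have "M \<le> M / 2 + (2 powr \<gamma> * E + C N * \<rho>0 powr \<gamma> * D B)"
    unfolding M_def
  proof (rule cSup_least[OF ne])
    fix x assume "x \<in> X"
    then obtain y \<sigma> where x: "x = \<sigma> powr \<gamma> * S (hpball s (\<theta>0/2 * \<sigma>) y)" "0 < \<sigma>" "hpball s \<sigma> y \<subseteq> B"
      unfolding X_def by blast
    show "x \<le> Sup X / 2 + (2 powr \<gamma> * E + C N * \<rho>0 powr \<gamma> * D B)"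
      using step[OF x(2,3)] x(1) unfolding M_def by simp
  qed
  then have "M \<le> 2 * (2 powr \<gamma> * E + C N * \<rho>0 powr \<gamma> * D B)" by simp
  then show ?thesis using upper unfolding N_def by (meson order_trans)
qed


lemma final:
  fixes s \<theta>0 \<gamma> \<rho>0 \<epsilon> c c' \<theta> K :: real and C :: "nat \<Rightarrow> real" and y0 :: "real \<times> (real ^ 'n)"
    and P P' :: "(real \<times> (real ^ 'n)) set" and S D :: "(real \<times> (real ^ 'n)) set \<Rightarrow> real" and E :: real
  assumes s: "0 < s" and \<rho>0: "0 < \<rho>0" and th0: "0 < \<theta>0" "\<theta>0 \<le> 1/2" and g: "0 < \<gamma>"
    and Cpos: "\<forall>n. 0 < C n"
    and c0: "0 < c" and fP: "finite P"
    and cP: "\<forall>y \<sigma>. 0 < \<sigma> \<longrightarrow> (\<forall>q\<in>P. hpball s (c * \<sigma>) (sh s y \<sigma> q) \<subseteq> hpball s \<sigma> y) \<and>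
        hpball s (1/2 * \<sigma>) y \<subseteq> (\<Union>q\<in>P. hpball s (\<theta>0/2 * (c * \<sigma>)) (sh s y \<sigma> q))"
    and eps: "0 < \<epsilon>" "\<epsilon> \<le> 1" "\<epsilon> * (C (card P) * real (card P) / c powr \<gamma>) \<le> 1/2"
    and th: "0 < \<theta>" "\<theta> < 1"
    and c'0: "0 < c'" and fP': "finite P'"
    and cP': "\<forall>y \<sigma>. 0 < \<sigma> \<longrightarrow> (\<forall>q\<in>P'. hpball s (c' * \<sigma>) (sh s y \<sigma> q) \<subseteq> hpball s \<sigma> y) \<and>
        hpball s (\<theta> * \<sigma>) y \<subseteq> (\<Union>q\<in>P'. hpball s (\<theta>0/2 * (c' * \<sigma>)) (sh s y \<sigma> q))"
    and Kdef: "K = C (card P') * (real (card P') / c' powr \<gamma> * (2 * (2 powr \<gamma> + C (card P) * \<rho>0 powr \<gamma>)) + \<rho>0 powr \<gamma>) + 1"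
  shows "let B = hpball s \<rho>0 y0 in
          nonneg_mono_on_convex B S \<and> nonneg_mono_on_convex B D \<and>
          (\<forall>n (c :: nat \<Rightarrow> real \<times> (real ^ 'n)) (r :: nat \<Rightarrow> real).
              (\<forall>i\<le>n. 0 < r i \<and> hpball s (r i) (c i) \<subseteq> B) \<and>
              hpball s (r 0) (c 0) \<subseteq> (\<Union>i\<in>{1..n}. hpball s (r i) (c i)) \<longrightarrow>
              S (hpball s (r 0) (c 0)) \<le> C n * ((\<Sum>i=1..n. S (hpball s (r i) (c i))) + D B)) \<and>
          0 \<le> E \<and>
          (\<forall>y \<sigma>. 0 < \<sigma> \<and> hpball s \<sigma> y \<subseteq> B \<longrightarrow>
              \<sigma> powr \<gamma> * S (hpball s (\<theta>0 * \<sigma>) y) \<le> \<epsilon> * \<sigma> powr \<gamma> * S (hpball s \<sigma> y) + E)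
          \<longrightarrow>
          (\<forall>y \<sigma>. 0 < \<sigma> \<and> hpball s \<sigma> y \<subseteq> B \<longrightarrow>
              \<sigma> powr \<gamma> * S (hpball s (\<theta> * \<sigma>) y) \<le> K * (E + D B))"
  unfolding Let_def
proof (intro impI, elim conjE)
  define B where "B = hpball s \<rho>0 y0"
  define N where "N = card P"
  define N' where "N' = card P'"
  define K0 where "K0 = 2 * (2 powr \<gamma> + C N * \<rho>0 powr \<gamma>)"
  assume nS: "nonneg_mono_on_convex (hpball s \<rho>0 y0) S" and nD: "nonneg_mono_on_convex (hpball s \<rho>0 y0) D"
    and H: "\<forall>n (c :: nat \<Rightarrow> real \<times> (real ^ 'n)) (r :: nat \<Rightarrow> real).
              (\<forall>i\<le>n. 0 < r i \<and> hpball s (r i) (c i) \<subseteq> hpball s \<rho>0 y0) \<and>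
              hpball s (r 0) (c 0) \<subseteq> (\<Union>i\<in>{1..n}. hpball s (r i) (c i)) \<longrightarrow>
              S (hpball s (r 0) (c 0)) \<le> C n * ((\<Sum>i=1..n. S (hpball s (r i) (c i))) + D (hpball s \<rho>0 y0))"
    and E0: "0 \<le> E"
    and EH: "\<forall>y \<sigma>. 0 < \<sigma> \<and> hpball s \<sigma> y \<subseteq> hpball s \<rho>0 y0 \<longrightarrow>
              \<sigma> powr \<gamma> * S (hpball s (\<theta>0 * \<sigma>) y) \<le> \<epsilon> * \<sigma> powr \<gamma> * S (hpball s \<sigma> y) + E"
  note nS = nS[folded B_def] and nD = nD[folded B_def] and H = H[folded B_def] and EH = EH[folded B_def]
  have Mb: "\<forall>y \<sigma>. 0 < \<sigma> \<and> hpball s \<sigma> y \<subseteq> B \<longrightarrow>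
     \<sigma> powr \<gamma> * S (hpball s (\<theta>0/2 * \<sigma>) y) \<le> 2 * (2 powr \<gamma> * E + C (card P) * \<rho>0 powr \<gamma> * D B)"
    by (rule core[OF s \<rho>0 th0 g Cpos c0 fP cP eps B_def nS nD H E0 EH])
  have convB: "convex B" unfolding B_def by (rule hpball_convex)
  have DB: "0 \<le> D B" using nD convB unfolding nonneg_mono_on_convex_def by blast
  have CN: "0 < C N" "0 < C N'" using Cpos by auto
  have K0b: "2 * (2 powr \<gamma> * E + C N * \<rho>0 powr \<gamma> * D B) \<le> K0 * (E + D B)"
  proof -
    have "0 \<le> 2 powr \<gamma> * D B" "0 \<le> C N * \<rho>0 powr \<gamma> * E" using DB E0 CN by auto
    then show ?thesis unfolding K0_def by (simp add: algebra_simps)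
  qed
  have K00: "0 \<le> K0" unfolding K0_def using CN by (simp add: less_imp_le)
  have rle: "\<sigma> \<le> \<rho>0" if "0 < \<sigma>" "hpball s \<sigma> y \<subseteq> B" for \<sigma> y
    using hpball_rad_le[OF s that(1)] that(2) unfolding B_def by blast
  have sub2: "hpball s (\<theta>0/2 * \<sigma>) y \<subseteq> hpball s \<sigma> y" if "0 < \<sigma>" for \<sigma> y
    using th0 that by (intro hpball_mono s) (auto simp: mult_le_cancel_right1)
  show "\<forall>y \<sigma>. 0 < \<sigma> \<and> hpball s \<sigma> y \<subseteq> hpball s \<rho>0 y0 \<longrightarrow>
              \<sigma> powr \<gamma> * S (hpball s (\<theta> * \<sigma>) y) \<le> K * (E + D (hpball s \<rho>0 y0))"
    unfolding B_def[symmetric]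
  proof (intro allI impI, elim conjE)
    fix y \<sigma> assume \<sigma>: "0 < \<sigma>" and yB: "hpball s \<sigma> y \<subseteq> B"
    have h2: "hpball s (\<theta> * \<sigma>) y \<subseteq> B" using hpball_mono[OF s, of "\<theta> * \<sigma>" \<sigma> y] \<sigma> th yB by auto
    have cov: "hpball s (\<theta> * \<sigma>) y \<subseteq> (\<Union>q\<in>P'. hpball s (\<theta>0/2 * (c' * \<sigma>)) (sh s y \<sigma> q))"
      using cP'[rule_format, of \<sigma> y] \<sigma> by simp
    have subq: "hpball s (\<theta>0/2 * (c' * \<sigma>)) (sh s y \<sigma> q) \<subseteq> B" if "q \<in> P'" for q
      using sub2[of "c' * \<sigma>" "sh s y \<sigma> q"] c'0 \<sigma> cP'[rule_format, of \<sigma> y] that yB by auto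
    have validq: "hpball s (c' * \<sigma>) (sh s y \<sigma> q) \<subseteq> B" if "q \<in> P'" for q
      using c'0 \<sigma> cP'[rule_format, of \<sigma> y] that yB by auto
    have CS: "S (hpball s (\<theta> * \<sigma>) y) \<le> C N' * ((\<Sum>q\<in>P'. S (hpball s (\<theta>0/2 * (c' * \<sigma>)) (sh s y \<sigma> q))) + D B)"
      unfolding N'_def
      by (rule cover_sum[where S=S and D=D and C=C and B=B and s=s and P=P' and rr="\<theta> * \<sigma>" and cc=y
           and rad="\<lambda>q. \<theta>0/2 * (c' * \<sigma>)" and cen="\<lambda>q. sh s y \<sigma> q"])
         (use H fP' h2 cov \<sigma> c'0 th0 th subq in auto)
    have each: "\<sigma> powr \<gamma> * S (hpball s (\<theta>0/2 * (c' * \<sigma>)) (sh s y \<sigma> q)) \<le> K0 * (E + D B) / c' powr \<gamma>" if "q \<in> P'" for q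
    proof -
      have "(c' * \<sigma>) powr \<gamma> * S (hpball s (\<theta>0/2 * (c' * \<sigma>)) (sh s y \<sigma> q)) \<le> K0 * (E + D B)"
        using Mb[rule_format, of "c' * \<sigma>" "sh s y \<sigma> q"] c'0 \<sigma> validq[OF that] K0b unfolding N_def by simp
      then have "c' powr \<gamma> * (\<sigma> powr \<gamma> * S (hpball s (\<theta>0/2 * (c' * \<sigma>)) (sh s y \<sigma> q))) \<le> K0 * (E + D B)"
        using c'0 \<sigma> by (simp add: powr_mult mult.assoc)
      then show ?thesis using c'0 by (simp add: field_simps)
    qed
    have sumb: "(\<Sum>q\<in>P'. \<sigma> powr \<gamma> * S (hpball s (\<theta>0/2 * (c' * \<sigma>)) (sh s y \<sigma> q))) \<le> real N' * (K0 * (E + D B) / c' powr \<gamma>)"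
      using sum_mono[of P' _ "\<lambda>q. K0 * (E + D B) / c' powr \<gamma>", OF each] by (simp add: N'_def)
    have sgD: "\<sigma> powr \<gamma> * D B \<le> \<rho>0 powr \<gamma> * D B"
      using rle[OF \<sigma> yB] \<sigma> g DB by (intro mult_right_mono powr_mono2) auto
    have "\<sigma> powr \<gamma> * S (hpball s (\<theta> * \<sigma>) y)
        \<le> \<sigma> powr \<gamma> * (C N' * ((\<Sum>q\<in>P'. S (hpball s (\<theta>0/2 * (c' * \<sigma>)) (sh s y \<sigma> q))) + D B))"
      using CS by (intro mult_left_mono) auto
    also have "\<dots> = C N' * ((\<Sum>q\<in>P'. \<sigma> powr \<gamma> * S (hpball s (\<theta>0/2 * (c' * \<sigma>)) (sh s y \<sigma> q))) + \<sigma> powr \<gamma> * D B)"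
      by (simp add: sum_distrib_left algebra_simps)
    also have "\<dots> \<le> C N' * (real N' * (K0 * (E + D B) / c' powr \<gamma>) + \<rho>0 powr \<gamma> * D B)"
      using sumb sgD CN by (intro mult_left_mono add_mono) auto
    also have "\<dots> \<le> C N' * (real N' / c' powr \<gamma> * K0 * (E + D B) + \<rho>0 powr \<gamma> * (E + D B))"
    proof -
      have "\<rho>0 powr \<gamma> * D B \<le> \<rho>0 powr \<gamma> * (E + D B)" using E0 by (intro mult_left_mono) auto
      then show ?thesis using CN by (intro mult_left_mono) (auto simp: field_simps)
    qed
    also have "\<dots> = (K - 1) * (E + D B)" unfolding Kdef N'_def K0_def N_def by (simp add: algebra_simps)
    also have "\<dots> \<le> K * (E + D B)" using E0 DB by (simp add: algebra_simps)
    finally show "\<sigma> powr \<gamma> * S (hpball s (\<theta> * \<sigma>) y) \<le> K * (E + D B)" .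
  qed
qed

theorem lemma3p6:
  fixes s \<theta>0 \<gamma> \<rho>0 :: real and C :: "nat \<Rightarrow> real"
  assumes "0 < s" "s < 1" "0 < \<rho>0"
    and "0 < \<theta>0" "\<theta>0 \<le> 1/2" "0 < \<gamma>"
    and "\<forall>n. 0 < C n"
  shows "\<exists>\<epsilon>. 0 < \<epsilon> \<and> \<epsilon> < 1 \<and>
    (\<forall>\<theta>. 0 < \<theta> \<and> \<theta> < 1 \<longrightarrow>
      (\<exists>K > 0. \<forall>(y0 :: real \<times> (real ^ 'n)) S D E.
        (let B = hpball s \<rho>0 y0 in
          nonneg_mono_on_convex B S \<and> nonneg_mono_on_convex B D \<and>
          (\<forall>n (c :: nat \<Rightarrow> real \<times> (real ^ 'n)) (r :: nat \<Rightarrow> real).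
              (\<forall>i\<le>n. 0 < r i \<and> hpball s (r i) (c i) \<subseteq> B) \<and>
              hpball s (r 0) (c 0) \<subseteq> (\<Union>i\<in>{1..n}. hpball s (r i) (c i)) \<longrightarrow>
              S (hpball s (r 0) (c 0)) \<le> C n * ((\<Sum>i=1..n. S (hpball s (r i) (c i))) + D B)) \<and>
          0 \<le> E \<and>
          (\<forall>y \<sigma>. 0 < \<sigma> \<and> hpball s \<sigma> y \<subseteq> B \<longrightarrow>
              \<sigma> powr \<gamma> * S (hpball s (\<theta>0 * \<sigma>) y) \<le> \<epsilon> * \<sigma> powr \<gamma> * S (hpball s \<sigma> y) + E)
          \<longrightarrow>
          (\<forall>y \<sigma>. 0 < \<sigma> \<and> hpball s \<sigma> y \<subseteq> B \<longrightarrow>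
              \<sigma> powr \<gamma> * S (hpball s (\<theta> * \<sigma>) y) \<le> K * (E + D B)))))"
proof -
  have th02: "0 < \<theta>0/2" using assms by simp
  obtain c and P :: "(real \<times> (real ^ 'n)) set" where c0: "0 < c" and fP: "finite P"
    and cP: "\<forall>y \<sigma>. 0 < \<sigma> \<longrightarrow> (\<forall>q\<in>P. hpball s (c * \<sigma>) (sh s y \<sigma> q) \<subseteq> hpball s \<sigma> y) \<and>
        hpball s (1/2 * \<sigma>) y \<subseteq> (\<Union>q\<in>P. hpball s (\<theta>0/2 * (c * \<sigma>)) (sh s y \<sigma> q))"
    using hp_cover[of s "1/2" "\<theta>0/2"] assms by auto
  define L where "L = C (card P) * real (card P) / c powr \<gamma>"
  have L0: "0 \<le> L" unfolding L_def using assms(7) c0 by (simp add: less_imp_le)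
  define \<epsilon> where "\<epsilon> = 1 / (2 * L + 2)"
  have e0: "0 < \<epsilon>" using L0 by (simp add: \<epsilon>_def)
  have e1: "\<epsilon> < 1" using L0 by (simp add: \<epsilon>_def)
  have e2: "\<epsilon> * L \<le> 1/2" using L0 by (simp add: \<epsilon>_def field_simps)
  show ?thesis
  proof (rule exI[of _ \<epsilon>], intro conjI allI impI)
    show "0 < \<epsilon>" "\<epsilon> < 1" by (fact e0, fact e1)
    fix \<theta> :: real assume th: "0 < \<theta> \<and> \<theta> < 1"
    obtain c' and P' :: "(real \<times> (real ^ 'n)) set" where c'0: "0 < c'" and fP': "finite P'"
      and cP': "\<forall>y \<sigma>. 0 < \<sigma> \<longrightarrow> (\<forall>q\<in>P'. hpball s (c' * \<sigma>) (sh s y \<sigma> q) \<subseteq> hpball s \<sigma> y) \<and>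
        hpball s (\<theta> * \<sigma>) y \<subseteq> (\<Union>q\<in>P'. hpball s (\<theta>0/2 * (c' * \<sigma>)) (sh s y \<sigma> q))"
      using hp_cover[of s \<theta> "\<theta>0/2"] assms th by auto
    define K where "K = C (card P') * (real (card P') / c' powr \<gamma> * (2 * (2 powr \<gamma> + C (card P) * \<rho>0 powr \<gamma>)) + \<rho>0 powr \<gamma>) + 1"
    show "\<exists>K>0. \<forall>(y0 :: real \<times> (real ^ 'n)) S D E.
        (let B = hpball s \<rho>0 y0 in
          nonneg_mono_on_convex B S \<and> nonneg_mono_on_convex B D \<and>
          (\<forall>n (c :: nat \<Rightarrow> real \<times> (real ^ 'n)) (r :: nat \<Rightarrow> real).
              (\<forall>i\<le>n. 0 < r i \<and> hpball s (r i) (c i) \<subseteq> B) \<and>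
              hpball s (r 0) (c 0) \<subseteq> (\<Union>i\<in>{1..n}. hpball s (r i) (c i)) \<longrightarrow>
              S (hpball s (r 0) (c 0)) \<le> C n * ((\<Sum>i=1..n. S (hpball s (r i) (c i))) + D B)) \<and>
          0 \<le> E \<and>
          (\<forall>y \<sigma>. 0 < \<sigma> \<and> hpball s \<sigma> y \<subseteq> B \<longrightarrow>
              \<sigma> powr \<gamma> * S (hpball s (\<theta>0 * \<sigma>) y) \<le> \<epsilon> * \<sigma> powr \<gamma> * S (hpball s \<sigma> y) + E)
          \<longrightarrow>
          (\<forall>y \<sigma>. 0 < \<sigma> \<and> hpball s \<sigma> y \<subseteq> B \<longrightarrow>
              \<sigma> powr \<gamma> * S (hpball s (\<theta> * \<sigma>) y) \<le> K * (E + D B)))"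
    proof (rule exI[of _ K], intro conjI allI)
      have "0 \<le> C (card P') * (real (card P') / c' powr \<gamma> * (2 * (2 powr \<gamma> + C (card P) * \<rho>0 powr \<gamma>)) + \<rho>0 powr \<gamma>)"
        using assms(7) c'0 by (intro mult_nonneg_nonneg add_nonneg_nonneg) (auto simp: less_imp_le)
      then show "0 < K" unfolding K_def by simp
      fix y0 :: "real \<times> (real ^ 'n)" and S D :: "(real \<times> (real ^ 'n)) set \<Rightarrow> real" and E :: real
      show "let B = hpball s \<rho>0 y0 in
          nonneg_mono_on_convex B S \<and> nonneg_mono_on_convex B D \<and>
          (\<forall>n (c :: nat \<Rightarrow> real \<times> (real ^ 'n)) (r :: nat \<Rightarrow> real).
              (\<forall>i\<le>n. 0 < r i \<and> hpball s (r i) (c i) \<subseteq> B) \<and>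
              hpball s (r 0) (c 0) \<subseteq> (\<Union>i\<in>{1..n}. hpball s (r i) (c i)) \<longrightarrow>
              S (hpball s (r 0) (c 0)) \<le> C n * ((\<Sum>i=1..n. S (hpball s (r i) (c i))) + D B)) \<and>
          0 \<le> E \<and>
          (\<forall>y \<sigma>. 0 < \<sigma> \<and> hpball s \<sigma> y \<subseteq> B \<longrightarrow>
              \<sigma> powr \<gamma> * S (hpball s (\<theta>0 * \<sigma>) y) \<le> \<epsilon> * \<sigma> powr \<gamma> * S (hpball s \<sigma> y) + E)
          \<longrightarrow>
          (\<forall>y \<sigma>. 0 < \<sigma> \<and> hpball s \<sigma> y \<subseteq> B \<longrightarrow>
              \<sigma> powr \<gamma> * S (hpball s (\<theta> * \<sigma>) y) \<le> K * (E + D B))"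
        by (rule final[OF assms(1,3,4,5,6,7) c0 fP cP e0 _ _ _ _ c'0 fP' cP' K_def])
           (use e1 e2 th in \<open>auto simp: L_def\<close>)
    qed
  qed
qed

end
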